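(* If a non-empty graph $T$ is a $\mathsf{TJ}_n$-graph for infinitely many integers $n$, then there exists an integer $k$ such that $T$ is a maximum $\mathsf{TJ}_k$-graph.
   Context: Graphs are finite, simple, undirected; non-empty means having at least one vertex. $\mathsf{TJ}_k(G)$ is the graph on the cliques of $G$ of size $k$ where $C, C'$ are adjacent iff $|C \setminus C'| = |C' \setminus C| = 1$. $T$ is a $\mathsf{TJ}_k$-graph if $T \cong \mathsf{TJ}_k(G)$ for some graph $G$, and a maximum $\mathsf{TJ}_k$-graph if $T \cong \mathsf{TJ}_k(G)$ for some $G$ with $\omega(G) = k$ ($\omega$ = maximum clique size). *)

theory Defs
  imports Main
begin

type_synonym 'a sgraph = "'a set \<times> 'a set set"

definition verts :: "'a sgraph \<Rightarrow> 'a set" where "verts G = fst G"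
definition edges :: "'a sgraph \<Rightarrow> 'a set set" where "edges G = snd G"

definition graph :: "'a sgraph \<Rightarrow> bool" where
  "graph G \<longleftrightarrow> finite (verts G) \<and> (\<forall>e\<in>edges G. card e = 2 \<and> e \<subseteq> verts G)"

definition adj :: "'a sgraph \<Rightarrow> 'a \<Rightarrow> 'a \<Rightarrow> bool" where
  "adj G x y \<longleftrightarrow> {x, y} \<in> edges G"

definition clique :: "'a sgraph \<Rightarrow> 'a set \<Rightarrow> bool" where
  "clique G C \<longleftrightarrow> C \<subseteq> verts G \<and> (\<forall>x\<in>C. \<forall>y\<in>C. x \<noteq> y \<longrightarrow> adj G x y)"

text \<open>Clique number omega(G): maximum size of a clique (the empty set is a clique).\<close>
definition clique_number :: "'a sgraph \<Rightarrow> nat" where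
  "clique_number G = Max {card C | C. clique G C}"

definition TJ :: "nat \<Rightarrow> 'a sgraph \<Rightarrow> 'a set sgraph" where
  "TJ k G = ({C. clique G C \<and> card C = k},
             {{C, C'} | C C'. clique G C \<and> card C = k \<and> clique G C' \<and> card C' = k \<and>
                              card (C - C') = 1 \<and> card (C' - C) = 1})"

definition graph_iso :: "'a sgraph \<Rightarrow> 'b sgraph \<Rightarrow> bool" where
  "graph_iso T H \<longleftrightarrow> (\<exists>f. bij_betw f (verts T) (verts H) \<and>
      (\<forall>x\<in>verts T. \<forall>y\<in>verts T. adj T x y \<longleftrightarrow> adj H (f x) (f y)))"

text \<open>Every finite graph is isomorphic to one on natural-number vertices, so the
  host graph G is taken with vertices in nat.\<close>
definition is_TJ :: "nat \<Rightarrow> 'a sgraph \<Rightarrow> bool" where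
  "is_TJ k T \<longleftrightarrow> (\<exists>G :: nat sgraph. graph G \<and> graph_iso T (TJ k G))"

definition is_max_TJ :: "nat \<Rightarrow> 'a sgraph \<Rightarrow> bool" where
  "is_max_TJ k T \<longleftrightarrow> (\<exists>G :: nat sgraph. graph G \<and> clique_number G = k \<and> graph_iso T (TJ k G))"

end

theory Submission
  imports Defs
begin

theorem proposition4p13:
  fixes T :: "'a sgraph"
  assumes "graph T"
    and "verts T \<noteq> {}"
    and "infinite {n. is_TJ n T}"
  shows "\<exists>k. is_max_TJ k T"
proof -
  define m where "m = card (verts T)"
  have finT: "finite (verts T)" using assms(1) unfolding graph_def by simp
  have m0: "m \<ge> 1" using finT assms(2) unfolding m_def
    by (simp add: Suc_leI card_gt_0_iff)
  obtain n where nm: "n \<ge> m" and tj: "is_TJ n T"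
  proof -
    have "\<not> {n. is_TJ n T} \<subseteq> {..<m}" using assms(3) finite_subset by blast
    then obtain x where "is_TJ x T" "\<not> x < m" by blast
    then show ?thesis using that by (simp add: not_less)
  qed
  obtain G :: "nat sgraph" where gG: "graph G" and iso: "graph_iso T (TJ n G)"
    using tj unfolding is_TJ_def by blast
  obtain f where bij: "bij_betw f (verts T) (verts (TJ n G))"
    using iso unfolding graph_iso_def by blast
  have V: "verts (TJ n G) = {C. clique G C \<and> card C = n}"
    by (simp add: TJ_def verts_def)
  have cardV: "card (verts (TJ n G)) = m"
    using bij_betw_same_card[OF bij] unfolding m_def by simp
  have finV: "finite (verts (TJ n G))"
    using cardV m0 card.infinite by fastforce
  have le: "card C \<le> n" if cl: "clique G C" for C
  proof (rule ccontr)
    assume "\<not> card C \<le> n"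
    then have "n + 1 \<le> card C" by simp
    moreover have "finite C" using cl gG unfolding clique_def graph_def
      using finite_subset by blast
    ultimately obtain K where K: "K \<subseteq> C" "card K = n + 1"
      by (meson obtain_subset_with_card_n)
    have finK: "finite K" using K(2) card.infinite by fastforce
    have sub: "(\<lambda>x. K - {x}) ` K \<subseteq> verts (TJ n G)"
    proof
      fix D assume "D \<in> (\<lambda>x. K - {x}) ` K"
      then obtain x where x: "x \<in> K" "D = K - {x}" by blast
      have "clique G D" using cl K(1) x unfolding clique_def by blast
      moreover have "card D = n" using x K(2) finK by simp
      ultimately show "D \<in> verts (TJ n G)" using V by simp
    qed
    have inj: "inj_on (\<lambda>x. K - {x}) K"
      by (rule inj_onI) blast
    have "card ((\<lambda>x. K - {x}) ` K) = n + 1" using card_image[OF inj] K(2) by simp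
    then have "n + 1 \<le> m" using card_mono[OF finV sub] cardV by simp
    then show False using nm by simp
  qed
  obtain C0 where "C0 \<in> verts (TJ n G)"
    using cardV m0 by fastforce
  then have C0: "clique G C0" "card C0 = n" using V by auto
  have "clique_number G = n"
    unfolding clique_number_def
  proof (rule Max_eqI)
    show "finite {card C |C. clique G C}"
      by (rule finite_subset[of _ "{..n}"]) (auto dest: le)
    show "\<And>y. y \<in> {card C |C. clique G C} \<Longrightarrow> y \<le> n" using le by blast
    show "n \<in> {card C |C. clique G C}" using C0 by blast
  qed
  then show ?thesis unfolding is_max_TJ_def using gG iso by blast
qed

end
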